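(* On $\mathbb{R}^k\times\mathbb{T}^n$ with coordinates $(x,\theta)=(x_1,\dots,x_k,\theta_1,\dots,\theta_n)$ consider the vector field $X=\xi+T$, where $\xi=\sum_{j=1}^k x_j\,\partial/\partial x_j$ and $T=\sum_{r=1}^n a_r\,\partial/\partial\theta_r$ with $a_1,\dots,a_n\in\mathbb{R}$ rationally independent. Then the set $\mathcal{L}_X$ of all smooth vector fields on $\mathbb{R}^k\times\mathbb{T}^n$ which commute with $X$ is a Lie algebra of dimension $k^2+n$ with basis $$\left\{ x_j\frac{\partial}{\partial x_\lambda},\ \frac{\partial}{\partial\theta_r}\right\},\quad j,\lambda=1,\dots,k;\ r=1,\dots,n.$$
   Context: A vector field $T=\sum_r a_r\partial/\partial\theta_r$ with constant coefficients on $\mathbb{T}^n$ is called affine; it is called dense when $a_1,\dots,a_n$ are rationally independent (equivalently its trajectories are dense). *)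

theory Defs
  imports "HOL-Analysis.Analysis"
begin

text \<open>Points of R^k x T^n are represented by their lifts (x, theta) in R^k x R^n;
  the torus is R^n / Z^n (period 1 in each angle coordinate). A vector field on
  R^k x T^n is a map Y : R^k x R^n -> R^k x R^n that is Z^n-periodic in theta.\<close>

type_synonym ('k, 'n) pt = "(real^'k) \<times> (real^'n)"
type_synonym ('k, 'n) vf = "('k, 'n) pt \<Rightarrow> ('k, 'n) pt"

coinductive smooth_fun :: "('a::euclidean_space \<Rightarrow> real) \<Rightarrow> bool" where
  "(\<forall>x. f differentiable (at x)) \<Longrightarrow>
   (\<forall>i\<in>Basis. smooth_fun (\<lambda>x. frechet_derivative f (at x) i)) \<Longrightarrow> smooth_fun f"

definition smooth_map :: "('a::euclidean_space \<Rightarrow> 'b::euclidean_space) \<Rightarrow> bool" where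
  "smooth_map f \<longleftrightarrow> (\<forall>b\<in>Basis. smooth_fun (\<lambda>x. f x \<bullet> b))"

definition torus_periodic :: "('k::finite, 'n::finite) vf \<Rightarrow> bool" where
  "torus_periodic Y \<longleftrightarrow> (\<forall>x \<theta> r. Y (x, \<theta> + axis r 1) = Y (x, \<theta>))"

definition smooth_vf :: "('k::finite, 'n::finite) vf \<Rightarrow> bool" where
  "smooth_vf Y \<longleftrightarrow> smooth_map Y \<and> torus_periodic Y"

definition lie_bracket :: "('a::euclidean_space \<Rightarrow> 'a) \<Rightarrow> ('a \<Rightarrow> 'a) \<Rightarrow> 'a \<Rightarrow> 'a" where
  "lie_bracket Y Z p = frechet_derivative Z (at p) (Y p) - frechet_derivative Y (at p) (Z p)"

text \<open>The vector field X = sum x_j d/dx_j + sum a_r d/dtheta_r.\<close>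
definition Xfield :: "real^'n \<Rightarrow> ('k::finite, 'n::finite) vf" where
  "Xfield a = (\<lambda>(x, \<theta>). (x, a))"

definition LX :: "real^'n \<Rightarrow> ('k::finite, 'n::finite) vf set" where
  "LX a = {Y. smooth_vf Y \<and> lie_bracket (Xfield a) Y = (\<lambda>p. 0)}"

definition rationally_independent :: "real^'n::finite \<Rightarrow> bool" where
  "rationally_independent a \<longleftrightarrow>
     (\<forall>q::'n \<Rightarrow> real. (\<forall>r. q r \<in> \<rat>) \<longrightarrow> (\<Sum>r\<in>UNIV. q r * a $ r) = 0 \<longrightarrow> (\<forall>r. q r = 0))"

text \<open>The proposed basis: Inl (j, l) is x_j d/dx_l, Inr r is d/dtheta_r.\<close>
fun basis_vf :: "('k \<times> 'k) + 'n \<Rightarrow> ('k::finite, 'n::finite) vf" where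
  "basis_vf (Inl (j, l)) = (\<lambda>(x, \<theta>). (axis l (x $ j), 0))"
| "basis_vf (Inr r) = (\<lambda>(x, \<theta>). (0, axis r 1))"

definition lin_comb :: "(('k \<times> 'k) + 'n \<Rightarrow> real) \<Rightarrow> ('k::finite, 'n::finite) vf" where
  "lin_comb c = (\<lambda>p. \<Sum>i\<in>UNIV. c i *\<^sub>R basis_vf i p)"

end

theory Submission imports Defs begin

lemma sum_restrict_a:
  fixes a :: "real^'n::finite"
  shows "(\<Sum>r\<in>UNIV. (if r \<in> S then w r else 0) * a $ r) = (\<Sum>r\<in>S. w r * a $ r)"
proof -
  have "(\<Sum>r\<in>UNIV. (if r \<in> S then w r else 0) * a $ r) = (\<Sum>r\<in>UNIV. (if r \<in> S then w r * a $ r else 0))"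
    by (intro sum.cong) auto
  also have "\<dots> = (\<Sum>r\<in>S. w r * a $ r)"
    by (simp add: sum.If_cases)
  finally show ?thesis .
qed

lemma ri_inj:
  fixes a :: "real^'n::finite"
  assumes "rationally_independent a"
  shows "inj (\<lambda>r. a $ r)"
proof (rule injI, rule ccontr)
  fix u v assume eq: "a $ u = a $ v" and ne: "u \<noteq> v"
  define q where "q = (\<lambda>r. if r \<in> {u,v} then (if r = u then 1 else -1::real) else 0)"
  have "(\<Sum>r\<in>UNIV. q r * a $ r) = (\<Sum>r\<in>{u,v}. (if r = u then 1 else -1) * a $ r)"
    unfolding q_def by (rule sum_restrict_a)
  also have "\<dots> = 0" using ne eq by simp
  finally have s0: "(\<Sum>r\<in>UNIV. q r * a $ r) = 0" .
  have "\<forall>r. q r \<in> \<rat>" by (simp add: q_def)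
  hence "\<forall>r. q r = 0" using s0 assms unfolding rationally_independent_def by blast
  then have "q u = 0" by blast
  then show False by (simp add: q_def)
qed

lemma kron:
  fixes a \<beta> :: "real^'n::finite"
  assumes ri: "rationally_independent a" and "\<epsilon> > 0"
  shows "\<exists>t (h::'n \<Rightarrow> int). \<forall>r. \<bar>t * a $ r - of_int (h r) - \<beta> $ r\<bar> < \<epsilon>"
proof -
  obtain e where e: "bij_betw e {0..<CARD('n)} (UNIV::'n set)"
    using ex_bij_betw_nat_finite[of "UNIV::'n set"] by auto
  define n where "n = CARD('n)"
  define \<theta> where "\<theta> = (\<lambda>i. a $ e i)"
  define \<alpha> where "\<alpha> = (\<lambda>i. \<beta> $ e i)"
  have injA: "inj (\<lambda>r. a $ r)" by (rule ri_inj[OF ri])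
  have inje: "inj_on e {..<n}" using e unfolding n_def bij_betw_def by (simp add: lessThan_atLeast0)
  have inj\<theta>: "inj_on \<theta> {..<n}"
    unfolding \<theta>_def using inje injA by (simp add: inj_on_def) 
  interpret M: Modules.module "(\<lambda>r. (*) (real_of_int r))"
    by (simp add: Modules.module.intro distrib_left mult.commute)
  have indp: "M.independent (\<theta> ` {..<n})"
    unfolding M.independent_explicit_module
  proof (intro allI impI)
    fix t u v
    assume t: "finite t" "t \<subseteq> \<theta> ` {..<n}" "(\<Sum>v\<in>t. real_of_int (u v) * v) = 0" "v \<in> t"
    define S where "S = {r. a $ r \<in> t}"
    define q where "q = (\<lambda>r. if r \<in> S then real_of_int (u (a $ r)) else 0)"
    have "(\<Sum>r\<in>UNIV. q r * a $ r) = (\<Sum>r\<in>S. real_of_int (u (a $ r)) * a $ r)"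
      unfolding q_def by (rule sum_restrict_a)
    also have "\<dots> = (\<Sum>v\<in>(\<lambda>r. a $ r) ` S. real_of_int (u v) * v)"
      by (subst sum.reindex) (use injA in \<open>auto simp: inj_on_def\<close>)
    also have "(\<lambda>r. a $ r) ` S = t"
      using t(2) unfolding S_def \<theta>_def by auto
    finally have "(\<Sum>r\<in>UNIV. q r * a $ r) = 0" using t(3) by simp
    moreover have "\<forall>r. q r \<in> \<rat>" unfolding q_def by auto
    ultimately have "\<forall>r. q r = 0" using ri unfolding rationally_independent_def by blast
    moreover obtain r where "v = a $ r" using t(2,4) unfolding \<theta>_def by auto
    ultimately show "u v = 0" using t(4) unfolding q_def S_def by (metis mem_Collect_eq of_int_eq_0_iff)
  qed
  obtain t h where th: "\<And>i. i < n \<Longrightarrow> \<bar>t * \<theta> i - of_int (h i) - \<alpha> i\<bar> < \<epsilon>"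
    using Kronecker_thm_1[OF indp inj\<theta> \<open>\<epsilon>>0\<close>, of \<alpha>] by metis
  define e' where "e' = inv_into {..<n} e"
  have "\<forall>r. \<bar>t * a $ r - of_int (h (e' r)) - \<beta> $ r\<bar> < \<epsilon>"
  proof
    fix r
    have "e' r < n" "e (e' r) = r" using e inv_into_into[of r e "{0..<CARD('n)}"] unfolding e'_def n_def
      by (auto simp: bij_betw_def lessThan_atLeast0 f_inv_into_f)
    then show "\<bar>t * a $ r - of_int (h (e' r)) - \<beta> $ r\<bar> < \<epsilon>"
      using th[of "e' r"] unfolding \<theta>_def \<alpha>_def by simp
  qed
  then show ?thesis by (rule_tac x=t in exI, rule_tac x="\<lambda>r. h (e' r)" in exI) simp
qed

lemma dirichlet_pos:
  fixes a :: "real^'n::finite"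
  assumes "\<epsilon> > 0"
  shows "\<exists>t (h::'n \<Rightarrow> int). t > K \<and> (\<forall>r. \<bar>t * a $ r - of_int (h r)\<bar> < \<epsilon>)"
proof -
  obtain e where e: "bij_betw e {0..<CARD('n)} (UNIV::'n set)"
    using ex_bij_betw_nat_finite[of "UNIV::'n set"] by auto
  obtain N :: nat where N: "1/N < \<epsilon>" "N > 0"
    by (metis \<open>\<epsilon> > 0\<close> gr_zeroI inverse_eq_divide real_arch_inverse)
  obtain M :: nat where M: "real M > \<bar>K\<bar>"
    using reals_Archimedean2 by blast
  define \<theta> where "\<theta> = (\<lambda>i. real M * a $ e i)"
  obtain q p where qp: "0<q" "\<And>i. i<CARD('n) \<Longrightarrow> \<bar>of_int q * \<theta> i - of_int(p i)\<bar> < 1/N"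
    using Dirichlet_approx_simult[OF N(2), where \<theta>=\<theta> and n="CARD('n)"] by metis
  define e' where "e' = inv_into {0..<CARD('n)} e"
  have "\<forall>r. \<bar>(of_int q * real M) * a $ r - of_int (p (e' r))\<bar> < \<epsilon>"
  proof
    fix r
    have "e' r < CARD('n)" "e (e' r) = r" using e inv_into_into[of r e "{0..<CARD('n)}"] unfolding e'_def
      by (auto simp: bij_betw_def f_inv_into_f)
    then show "\<bar>(of_int q * real M) * a $ r - of_int (p (e' r))\<bar> < \<epsilon>"
      using qp(2)[of "e' r"] N unfolding \<theta>_def by (simp add: mult.assoc)
  qed
  moreover have "of_int q * real M > K"
  proof -
    have "real_of_int q \<ge> 1" using qp(1) by simp
    then have "of_int q * real M \<ge> real M" using mult_right_mono[of 1 "real_of_int q" "real M"] by simp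
    then show ?thesis using M by linarith
  qed
  ultimately show ?thesis by (rule_tac x="of_int q * real M" in exI, rule_tac x="\<lambda>r. p (e' r)" in exI) simp
qed

definition intvec :: "real^'n::finite \<Rightarrow> bool" where
  "intvec m \<longleftrightarrow> (\<forall>r. m $ r \<in> \<int>)"

lemma norm_from_comp:
  fixes v :: "real^'n::finite"
  assumes "\<forall>r. \<bar>v $ r\<bar> < \<epsilon> / CARD('n)"
  shows "norm v < \<epsilon>"
proof -
  have "norm v \<le> (\<Sum>r\<in>UNIV. \<bar>v $ r\<bar>)" by (rule norm_le_l1_cart)
  also have "\<dots> < (\<Sum>r\<in>(UNIV::'n set). \<epsilon> / CARD('n))"
    by (rule sum_strict_mono) (use assms in auto)
  also have "\<dots> = \<epsilon>" by simp
  finally show ?thesis .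
qed

lemma recur_pos:
  fixes a :: "real^'n::finite"
  assumes "\<epsilon> > 0"
  shows "\<exists>t m. t > K \<and> intvec m \<and> norm (t *\<^sub>R a - m) < \<epsilon>"
proof -
  have "\<epsilon> / CARD('n) > 0" using assms by simp
  then obtain t and h :: "'n \<Rightarrow> int" where th: "t > K" "\<forall>r. \<bar>t * a $ r - of_int (h r)\<bar> < \<epsilon> / CARD('n)"
    using dirichlet_pos by blast
  define m :: "real^'n" where "m = (\<chi> r. of_int (h r))"
  have "intvec m" unfolding intvec_def m_def by simp
  moreover have "norm (t *\<^sub>R a - m) < \<epsilon>"
    by (rule norm_from_comp) (use th(2) in \<open>simp add: m_def\<close>)
  ultimately show ?thesis using th(1) by blast
qed

lemma recur_neg:
  fixes a :: "real^'n::finite"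
  assumes "\<epsilon> > 0"
  shows "\<exists>t m. t < K \<and> intvec m \<and> norm (t *\<^sub>R a - m) < \<epsilon>"
proof -
  obtain t m where tm: "t > - K" "intvec m" "norm (t *\<^sub>R a - m) < \<epsilon>"
    using recur_pos[OF assms] by blast
  have "intvec (-m)" using tm(2) unfolding intvec_def by simp
  moreover have "norm ((-t) *\<^sub>R a - (-m)) < \<epsilon>"
  proof -
    have "(-t) *\<^sub>R a - (-m) = - (t *\<^sub>R a - m)" by simp
    then show ?thesis using tm(3) by (simp only: norm_minus_cancel)
  qed
  ultimately show ?thesis using tm(1) by (rule_tac x="-t" in exI, rule_tac x="-m" in exI) simp
qed

lemma dense_orbit:
  fixes a \<beta> :: "real^'n::finite"
  assumes ri: "rationally_independent a" and "\<epsilon> > 0"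
  shows "\<exists>t m. intvec m \<and> norm (t *\<^sub>R a - m - \<beta>) < \<epsilon>"
proof -
  have "\<epsilon> / CARD('n) > 0" using assms by simp
  then obtain t and h :: "'n \<Rightarrow> int" where th: "\<forall>r. \<bar>t * a $ r - of_int (h r) - \<beta> $ r\<bar> < \<epsilon> / CARD('n)"
    using kron[OF ri] by blast
  define m :: "real^'n" where "m = (\<chi> r. of_int (h r))"
  have "intvec m" unfolding intvec_def m_def by simp
  moreover have "norm (t *\<^sub>R a - m - \<beta>) < \<epsilon>"
    by (rule norm_from_comp) (use th in \<open>simp add: m_def\<close>)
  ultimately show ?thesis by blast
qed


lemma smooth_affine:
  fixes l :: "'a::euclidean_space \<Rightarrow> real"
  assumes "linear l" shows "smooth_fun (\<lambda>p. l p + c)"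
proof -
  define X where "X = (\<lambda>f::'a \<Rightarrow> real. \<exists>l c. linear l \<and> f = (\<lambda>p. l p + c))"
  have "X (\<lambda>p. l p + c)" using assms unfolding X_def by blast
  then show ?thesis
  proof (rule smooth_fun.coinduct[of X])
    fix f assume "X f"
    then obtain l c where lc: "linear l" "f = (\<lambda>p. l p + c)" unfolding X_def by blast
    have d: "\<And>x. (f has_derivative l) (at x)"
      unfolding lc(2) by (rule has_derivative_add_const, rule linear_imp_has_derivative[OF lc(1)])
    have fd: "\<And>x. frechet_derivative f (at x) = l" using frechet_derivative_at[OF d] by simp
    have "\<forall>i\<in>Basis. X (\<lambda>x. frechet_derivative f (at x) i)"
      unfolding fd X_def by (auto intro!: exI[of _ "\<lambda>_. 0"] simp: linear_zero)
    moreover have "\<forall>x. f differentiable (at x)" using d by (auto simp: differentiable_def)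
    ultimately show "\<exists>f'. f = f' \<and> (\<forall>x. f' differentiable at x) \<and>
           (\<forall>i\<in>Basis. X (\<lambda>x. frechet_derivative f' (at x) i) \<or>
               smooth_fun (\<lambda>x. frechet_derivative f' (at x) i))" by blast
  qed
qed

definition Fv :: "real^'k^'k \<Rightarrow> real^'n \<Rightarrow> ('k::finite,'n::finite) vf" where
  "Fv M w = (\<lambda>p. (M *v fst p, w))"

lemma lin_Fv: "linear (\<lambda>h::('k::finite,'n::finite) pt. (M *v fst h, 0::real^'n))"
  by (auto simp: linear_iff matrix_vector_right_distrib matrix_vector_mult_scaleR)

lemma Fv_deriv:
  fixes M :: "real^'k::finite^'k" and w :: "real^'n::finite"
  shows "(Fv M w has_derivative (\<lambda>h. (M *v fst h, 0))) (at p)"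
proof -
  have "((\<lambda>h. (M *v fst h, 0::real^'n) + (0, w)) has_derivative (\<lambda>h. (M *v fst h, 0))) (at p)"
    by (rule has_derivative_add_const, rule linear_imp_has_derivative[OF lin_Fv])
  then show ?thesis by (simp add: Fv_def)
qed

lemma Fv_fd:
  fixes M :: "real^'k::finite^'k" and w :: "real^'n::finite"
  shows "frechet_derivative (Fv M w) (at p) = (\<lambda>h. (M *v fst h, 0))"
  by (rule frechet_derivative_at[OF Fv_deriv, symmetric])

lemma X_eq: "Xfield a = (\<lambda>p. (fst p, a))"
  by (auto simp: Xfield_def)

lemma X_deriv:
  fixes a :: "real^'n::finite" and p :: "('k::finite,'n) pt"
  shows "(Xfield a has_derivative (\<lambda>h. (fst h, 0))) (at p)"
proof -
  have lin: "linear (\<lambda>h::('k::finite,'n::finite) pt. (fst h, 0::real^'n))"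
    by (auto simp: linear_iff)
  have "((\<lambda>h. (fst h, 0::real^'n) + (0, a)) has_derivative (\<lambda>h. (fst h, 0))) (at p)"
    by (rule has_derivative_add_const, rule linear_imp_has_derivative[OF lin])
  then show ?thesis by (simp add: X_eq)
qed

lemma X_fd:
  fixes a :: "real^'n::finite" and p :: "('k::finite,'n) pt"
  shows "frechet_derivative (Xfield a) (at p) = (\<lambda>h. (fst h, 0))"
  by (rule frechet_derivative_at[OF X_deriv, symmetric])

lemma lin_inner:
  assumes "linear L" shows "linear (\<lambda>p. L p \<bullet> b)"
proof -
  have "bounded_linear (\<lambda>v. v \<bullet> b)" by (rule bounded_linear_inner_left)
  then have "linear (\<lambda>v. v \<bullet> b)" by (rule bounded_linear.linear)
  then show ?thesis using linear_compose[OF assms] by (simp add: o_def)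
qed

lemma Fv_smooth:
  fixes M :: "real^'k::finite^'k" and w :: "real^'n::finite"
  shows "smooth_vf (Fv M w)"
  unfolding smooth_vf_def
proof
  show "smooth_map (Fv M w)" unfolding smooth_map_def
  proof
    fix b :: "('k,'n) pt" assume "b \<in> Basis"
    have eq: "(\<lambda>p. Fv M w p \<bullet> b) = (\<lambda>p. (M *v fst p, 0::real^'n) \<bullet> b + (0, w) \<bullet> b)"
      by (auto simp: Fv_def inner_prod_def)
    show "smooth_fun (\<lambda>p. Fv M w p \<bullet> b)"
      unfolding eq by (rule smooth_affine, rule lin_inner, rule lin_Fv)
  qed
  show "torus_periodic (Fv M w)" by (simp add: torus_periodic_def Fv_def)
qed

lemma Fv_LX:
  fixes M :: "real^'k::finite^'k" and w :: "real^'n::finite"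
  shows "Fv M w \<in> LX a"
  unfolding LX_def
proof (intro CollectI conjI Fv_smooth ext)
  fix p :: "('k,'n) pt"
  show "lie_bracket (Xfield a) (Fv M w) p = 0"
    by (simp only: lie_bracket_def Fv_fd X_fd) (simp add: X_eq Fv_def)
qed

lemma Fv_bracket: "lie_bracket (Fv A u) (Fv B w) = Fv (B ** A - A ** B) 0"
  by (rule ext, simp only: lie_bracket_def Fv_fd) (simp add: Fv_def matrix_vector_mul_assoc matrix_vector_mult_diff_rdistrib)

lemma Fv_lincomb: "Fv M w p + Fv M' w' p = Fv (M + M') (w + w') p"
  "s *\<^sub>R Fv M w p = Fv (s *\<^sub>R M) (s *\<^sub>R w) p"
  by (auto simp: Fv_def matrix_vector_mult_add_rdistrib scaleR_matrix_vector_assoc)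

lemma sum_UNIV_sum: "(\<Sum>i\<in>(UNIV::('a::finite + 'b::finite) set). g i) = (\<Sum>ij\<in>UNIV. g (Inl ij)) + (\<Sum>r\<in>UNIV. g (Inr r))"
  by (subst UNIV_Plus_UNIV[symmetric], subst sum.Plus) (auto simp: o_def)

lemma sum_mult_delta:
  fixes f :: "'a::finite \<Rightarrow> real"
  shows "(\<Sum>x\<in>UNIV. f x * (if i = x then 1 else 0)) = f i"
proof -
  have "(\<Sum>x\<in>UNIV. f x * (if i = x then 1 else 0)) = (\<Sum>x\<in>UNIV. if i = x then f x else 0)"
    by (rule sum.cong) auto
  then show ?thesis by simp
qed

lemma sum_pair_UNIV: "(\<Sum>ij\<in>(UNIV::('a::finite \<times> 'b::finite) set). g ij) = (\<Sum>j\<in>UNIV. \<Sum>l\<in>UNIV. g (j, l))"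
proof -
  have "(\<Sum>j\<in>UNIV. \<Sum>l\<in>UNIV. g (j, l)) = (\<Sum>(j, l)\<in>UNIV \<times> UNIV. g (j, l))"
    by (rule sum.cartesian_product)
  then show ?thesis by simp
qed

definition matc :: "(('k \<times> 'k) + 'n \<Rightarrow> real) \<Rightarrow> real^'k^'k" where
  "matc c = (\<chi> l j. c (Inl (j, l)))"
definition vecc :: "(('k \<times> 'k) + 'n \<Rightarrow> real) \<Rightarrow> real^'n" where
  "vecc c = (\<chi> r. c (Inr r))"

lemma lin_comb_Fv:
  fixes c :: "('k::finite \<times> 'k) + 'n::finite \<Rightarrow> real"
  shows "lin_comb c = Fv (matc c) (vecc c)"
proof (rule ext)
  fix p :: "('k::finite,'n::finite) pt"
  obtain x \<theta> where p: "p = (x, \<theta>)" by (cases p)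
  have e1: "lin_comb c p = (\<Sum>ij\<in>UNIV. c (Inl ij) *\<^sub>R basis_vf (Inl ij) p) + (\<Sum>r\<in>UNIV. c (Inr r) *\<^sub>R basis_vf (Inr r) p)"
    unfolding lin_comb_def by (rule sum_UNIV_sum)
  have e2: "(\<Sum>ij\<in>UNIV. c (Inl ij) *\<^sub>R basis_vf (Inl ij) p) = ((\<Sum>ij\<in>UNIV. c (Inl ij) *\<^sub>R axis (snd ij) (x $ fst ij)), 0)"
  proof -
    have e: "\<And>ij. c (Inl ij) *\<^sub>R basis_vf (Inl ij) p = (c (Inl ij) *\<^sub>R axis (snd ij) (x $ fst ij), 0)"
      by (case_tac ij) (simp add: p)
    show ?thesis unfolding e sum_prod by simp
  qed
  have e3: "(\<Sum>r\<in>UNIV. c (Inr r) *\<^sub>R basis_vf (Inr r) p) = (0, \<Sum>r\<in>UNIV. c (Inr r) *\<^sub>R axis r 1)"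
    by (simp add: p sum_prod)
  have e4: "(\<Sum>ij\<in>UNIV. c (Inl ij) *\<^sub>R axis (snd ij) (x $ fst ij)) = matc c *v x"
  proof (subst vec_eq_iff, intro allI)
    fix l
    have "(\<Sum>ij\<in>UNIV. c (Inl ij) *\<^sub>R axis (snd ij) (x $ fst ij)) $ l
        = (\<Sum>ij\<in>UNIV. (if snd ij = l then c (Inl ij) * x $ fst ij else 0))"
      by (simp add: sum_component axis_def, rule sum.cong, auto)
    also have "\<dots> = (\<Sum>j\<in>UNIV. \<Sum>l'\<in>UNIV. (if l' = l then c (Inl (j, l')) * x $ j else 0))"
      by (subst sum_pair_UNIV) simp
    also have "\<dots> = (\<Sum>j\<in>UNIV. c (Inl (j, l)) * x $ j)"
      by simp
    also have "\<dots> = (matc c *v x) $ l"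
      by (simp add: matc_def matrix_vector_mult_def)
    finally show "(\<Sum>ij\<in>UNIV. c (Inl ij) *\<^sub>R axis (snd ij) (x $ fst ij)) $ l = (matc c *v x) $ l" .
  qed
  have e5: "(\<Sum>r\<in>UNIV. c (Inr r) *\<^sub>R axis r (1::real)) = vecc c"
  proof (subst vec_eq_iff, intro allI)
    fix i
    have "(\<Sum>r\<in>UNIV. c (Inr r) *\<^sub>R axis r (1::real)) $ i = (\<Sum>r\<in>UNIV. if r = i then c (Inr r) else 0)"
      unfolding sum_component by (rule sum.cong) (auto simp: axis_def)
    also have "\<dots> = c (Inr i)" by simp
    finally show "(\<Sum>r\<in>UNIV. c (Inr r) *\<^sub>R axis r (1::real)) $ i = vecc c $ i" by (simp add: vecc_def)
  qed
  have "lin_comb c p = (matc c *v x, 0) + (0, vecc c)"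
    unfolding e1 e2 e3 e4 e5 by (rule refl)
  also have "\<dots> = Fv (matc c) (vecc c) p"
    unfolding Fv_def p by simp
  finally show "lin_comb c p = Fv (matc c) (vecc c) p" .
qed

definition coef :: "real^'k^'k \<Rightarrow> real^'n \<Rightarrow> (('k \<times> 'k) + 'n \<Rightarrow> real)" where
  "coef M w = (\<lambda>i. case i of Inl (j, l) \<Rightarrow> M $ l $ j | Inr r \<Rightarrow> w $ r)"

lemma Fv_lin_comb: "Fv M w = lin_comb (coef M w)"
proof -
  have "matc (coef M w) = M" by (simp add: matc_def coef_def vec_eq_iff)
  moreover have "vecc (coef M w) = w" by (simp add: vecc_def coef_def vec_eq_iff)
  ultimately show ?thesis by (simp add: lin_comb_Fv)
qed


lemma smooth_diff: "smooth_fun f \<Longrightarrow> f differentiable (at x)"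
  by (erule smooth_fun.cases) auto

lemma smooth_deriv: "smooth_fun f \<Longrightarrow> i \<in> Basis \<Longrightarrow> smooth_fun (\<lambda>x. frechet_derivative f (at x) i)"
  by (erule smooth_fun.cases) auto

lemma smooth_map_diff:
  fixes Y :: "'a::euclidean_space \<Rightarrow> 'b::euclidean_space"
  assumes "smooth_map Y" shows "Y differentiable (at p)"
proof -
  have eq: "Y = (\<lambda>p. \<Sum>b\<in>Basis. (Y p \<bullet> b) *\<^sub>R b)"
    by (simp add: euclidean_representation)
  have "(\<lambda>p. \<Sum>b\<in>Basis. (Y p \<bullet> b) *\<^sub>R b) differentiable (at p)"
    using assms unfolding smooth_map_def
    by (intro differentiable_sum) (auto intro!: differentiable_scaleR smooth_diff)
  then show ?thesis using eq by simp
qed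

lemma periodic_nat:
  assumes "torus_periodic Y"
  shows "Y (x, \<theta> + of_nat k *\<^sub>R axis r 1) = Y (x, \<theta>)"
proof (induction k arbitrary: \<theta>)
  case 0 then show ?case by simp
next
  case (Suc k)
  have "Y (x, \<theta> + of_nat (Suc k) *\<^sub>R axis r 1) = Y (x, (\<theta> + of_nat k *\<^sub>R axis r 1) + axis r 1)"
    by (simp add: algebra_simps)
  also have "\<dots> = Y (x, \<theta> + of_nat k *\<^sub>R axis r 1)"
    using assms unfolding torus_periodic_def by blast
  also have "\<dots> = Y (x, \<theta>)" by (rule Suc.IH)
  finally show ?case .
qed

lemma periodic_int:
  assumes "torus_periodic Y"
  shows "Y (x, \<theta> + of_int k *\<^sub>R axis r 1) = Y (x, \<theta>)"
proof (cases "k \<ge> 0")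
  case True
  then obtain n where "k = int n" by (rule nonneg_int_cases)
  then show ?thesis using periodic_nat[OF assms] by simp
next
  case False
  then have "0 \<le> -k" by simp
  then obtain n where "-k = int n" by (rule nonneg_int_cases)
  then have n: "k = - int n" by simp
  have "Y (x, \<theta>) = Y (x, (\<theta> + of_int k *\<^sub>R axis r 1) + of_nat n *\<^sub>R axis r 1)"
    by (simp add: n)
  also have "\<dots> = Y (x, \<theta> + of_int k *\<^sub>R axis r 1)" by (rule periodic_nat[OF assms])
  finally show ?thesis by simp
qed

lemma periodic_intvec:
  fixes Y :: "('k::finite, 'n::finite) vf"
  assumes "torus_periodic Y" and "intvec m"
  shows "Y (x, \<theta> + m) = Y (x, \<theta>)"
proof -
  obtain h :: "'n \<Rightarrow> int" where h: "\<And>r. m $ r = of_int (h r)"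
  proof -
    have "\<forall>r. \<exists>z::int. m $ r = of_int z" using assms(2) unfolding intvec_def by (auto elim!: Ints_cases)
    then have "\<exists>h::'n \<Rightarrow> int. \<forall>r. m $ r = of_int (h r)" by (rule choice)
    then show ?thesis using that by blast
  qed
  have m: "m = (\<Sum>r\<in>UNIV. of_int (h r) *\<^sub>R axis r 1)"
  proof (subst vec_eq_iff, intro allI)
    fix i
    have "(\<Sum>r\<in>UNIV. of_int (h r) *\<^sub>R axis r (1::real)) $ i = (\<Sum>r\<in>UNIV. if r = i then of_int (h r) else 0)"
      unfolding sum_component by (rule sum.cong) (auto simp: axis_def)
    also have "\<dots> = m $ i" by (simp add: h)
    finally show "m $ i = (\<Sum>r\<in>UNIV. of_int (h r) *\<^sub>R axis r (1::real)) $ i" by simp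
  qed
  have "\<And>\<theta>. Y (x, \<theta> + (\<Sum>r\<in>S. of_int (h r) *\<^sub>R axis r 1)) = Y (x, \<theta>)" if "finite S" for S
    using that
  proof (induction S rule: finite_induct)
    case empty then show ?case by simp
  next
    case (insert r S)
    fix \<theta>
    have "Y (x, \<theta> + (\<Sum>r\<in>insert r S. of_int (h r) *\<^sub>R axis r 1))
        = Y (x, (\<theta> + (\<Sum>r\<in>S. of_int (h r) *\<^sub>R axis r 1)) + of_int (h r) *\<^sub>R axis r 1)"
      using insert by (simp add: algebra_simps)
    also have "\<dots> = Y (x, \<theta>)" using periodic_int[OF assms(1)] insert by simp
    finally show "Y (x, \<theta> + (\<Sum>r\<in>insert r S. of_int (h r) *\<^sub>R axis r 1)) = Y (x, \<theta>)" .
  qed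
  then show ?thesis using m by simp
qed

lemma periodic_intvec_minus:
  fixes Y :: "('k::finite, 'n::finite) vf"
  assumes "torus_periodic Y" and "intvec m"
  shows "Y (x, \<theta> - m) = Y (x, \<theta>)"
proof -
  have "intvec (-m)" using assms(2) unfolding intvec_def by simp
  then show ?thesis using periodic_intvec[OF assms(1), of "-m"] by simp
qed

lemma flow:
  fixes Y :: "('k::finite, 'n::finite) vf"
  assumes Y: "Y \<in> LX a"
  shows "Y (exp t *\<^sub>R x, \<theta> + t *\<^sub>R a) = (exp t *\<^sub>R fst (Y (x, \<theta>)), snd (Y (x, \<theta>)))"
proof -
  have sm: "smooth_map Y" and br: "\<And>p. lie_bracket (Xfield a) Y p = 0"
    using Y unfolding LX_def smooth_vf_def by (auto dest: fun_cong)
  define \<gamma> where "\<gamma> = (\<lambda>t. (exp t *\<^sub>R x, \<theta> + t *\<^sub>R a))"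
  define y where "y = (\<lambda>t. Y (\<gamma> t))"
  have yd: "(y has_derivative (\<lambda>h. h *\<^sub>R (fst (y s), 0))) (at s)" for s
  proof -
    let ?D = "frechet_derivative Y (at (\<gamma> s))"
    have YD: "(Y has_derivative ?D) (at (\<gamma> s))"
      using smooth_map_diff[OF sm] frechet_derivative_works by blast
    have gd: "(\<gamma> has_derivative (\<lambda>h. h *\<^sub>R (exp s *\<^sub>R x, a))) (at s)"
      unfolding \<gamma>_def
      by (auto intro!: derivative_eq_intros simp: algebra_simps)
    have "((\<lambda>t. Y (\<gamma> t)) has_derivative (\<lambda>h. ?D (h *\<^sub>R (exp s *\<^sub>R x, a)))) (at s)"
      using diff_chain_at[OF gd YD] by (simp add: o_def)
    moreover have "?D (h *\<^sub>R (exp s *\<^sub>R x, a)) = h *\<^sub>R (fst (y s), 0)" for h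
    proof -
      have lin: "linear ?D" using YD has_derivative_linear by blast
      have e0: "?D (exp s *\<^sub>R x, a) = (fst (Y (\<gamma> s)), 0)"
        using br[of "\<gamma> s"] unfolding lie_bracket_def X_fd by (simp add: X_eq \<gamma>_def)
      have e1: "?D (h *\<^sub>R (exp s *\<^sub>R x, a)) = h *\<^sub>R ?D (exp s *\<^sub>R x, a)"
        by (rule linear_scale[OF lin])
      show ?thesis unfolding e1 e0 y_def by simp
    qed
    ultimately show ?thesis unfolding y_def by simp
  qed
  define z where "z = (\<lambda>t. (exp (-t) *\<^sub>R fst (y t), snd (y t)))"
  have zd: "(z has_derivative (\<lambda>h. 0)) (at s within UNIV)" for s
  proof -
    have yd1: "((\<lambda>t. fst (y t)) has_derivative (\<lambda>h. h *\<^sub>R fst (y s))) (at s)"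
      using has_derivative_fst[OF yd] by simp
    have yd2: "((\<lambda>t. snd (y t)) has_derivative (\<lambda>h. 0)) (at s)"
      using has_derivative_snd[OF yd] by simp
    have ed: "((\<lambda>t. exp (-t)) has_derivative (\<lambda>h. h * (- exp (-s)))) (at s)"
      by (auto intro!: derivative_eq_intros)
    have "(z has_derivative (\<lambda>h. (exp (-s) *\<^sub>R (h *\<^sub>R fst (y s)) + (h * (- exp (-s))) *\<^sub>R fst (y s), 0))) (at s)"
    proof -
      have "((\<lambda>t. exp (-t) *\<^sub>R fst (y t)) has_derivative (\<lambda>h. exp (-s) *\<^sub>R (h *\<^sub>R fst (y s)) + (h * (- exp (-s))) *\<^sub>R fst (y s))) (at s)"
        using has_derivative_scaleR[OF ed yd1] by simp
      then show ?thesis unfolding z_def by (intro has_derivative_Pair yd2)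
    qed
    then show ?thesis by (simp add: algebra_simps zero_prod_def)
  qed
  obtain c where c: "\<And>t. z t = c"
    using has_derivative_zero_constant[of UNIV z] zd by auto
  have "z t = z 0" using c by simp
  then have "exp (-t) *\<^sub>R fst (y t) = fst (y 0)" "snd (y t) = snd (y 0)"
    unfolding z_def by (auto simp: prod_eq_iff)
  then have h1: "exp (-t) *\<^sub>R fst (y t) = fst (y 0)" and h2: "snd (y t) = snd (y 0)" by auto
  have "fst (y t) = exp t *\<^sub>R (exp (-t) *\<^sub>R fst (y t))" by (simp add: scaleR_scaleR exp_minus_inverse)
  with h1 h2 have "fst (y t) = exp t *\<^sub>R fst (y 0)" "snd (y t) = snd (y 0)" by auto
  then show ?thesis unfolding y_def \<gamma>_def by (simp add: prod_eq_iff)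
qed


lemma LX_facts:
  fixes Y :: "('k::finite, 'n::finite) vf"
  assumes "Y \<in> LX a"
  shows "smooth_map Y" "torus_periodic Y" "isCont Y p"
  using assms unfolding LX_def smooth_vf_def
  by (auto intro: differentiable_imp_continuous_within smooth_map_diff)

lemma isCont_slice:
  fixes Y :: "('k::finite, 'n::finite) vf"
  assumes "\<And>p. isCont Y p"
  shows "isCont (\<lambda>\<theta>. Y (x, \<theta>)) \<theta>"
  by (rule isCont_o2[where f="\<lambda>\<theta>. (x, \<theta>)" and g=Y]) (auto intro!: continuous_intros assms)

lemma dense_const:
  fixes f :: "real^'n::finite \<Rightarrow> 'b::metric_space"
  assumes ri: "rationally_independent a" and c: "\<And>\<theta>. isCont f \<theta>"
    and per: "\<And>\<theta> m. intvec m \<Longrightarrow> f (\<theta> - m) = f \<theta>"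
    and inv: "\<And>\<theta> t. f (\<theta> + t *\<^sub>R a) = f \<theta>"
  shows "f \<theta> = f 0"
proof (rule ccontr)
  assume ne: "f \<theta> \<noteq> f 0"
  define \<epsilon> where "\<epsilon> = dist (f 0) (f \<theta>)"
  have "\<epsilon> > 0" using ne by (simp add: \<epsilon>_def)
  then obtain \<delta> where \<delta>: "\<delta>>0" "\<And>x'. dist x' \<theta> < \<delta> \<Longrightarrow> dist (f x') (f \<theta>) < \<epsilon>"
    using c[of \<theta>] unfolding continuous_at_eps_delta by blast
  obtain t m where tm: "intvec m" "norm (t *\<^sub>R a - m - \<theta>) < \<delta>"
    using dense_orbit[OF ri \<delta>(1)] by blast
  have "f (t *\<^sub>R a - m) = f 0" using per[OF tm(1), of "t *\<^sub>R a"] inv[of 0 t] by simp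
  moreover have "dist (t *\<^sub>R a - m) \<theta> < \<delta>" using tm(2) by (simp add: dist_norm)
  ultimately show False using \<delta>(2) unfolding \<epsilon>_def by fastforce
qed

lemma approach:
  fixes a :: "real^'n::finite" and x :: "real^'k::finite"
  assumes "\<delta> > 0"
  shows "\<exists>t m. intvec m \<and> (\<forall>s. 0 \<le> s \<and> s \<le> exp t \<longrightarrow> dist (s *\<^sub>R x, \<theta> + t *\<^sub>R a - m) (0, \<theta>) < \<delta>)"
proof -
  have nx: "norm x + 1 > 0" by (simp add: add_nonneg_pos)
  have pos: "\<delta> / (2 * (norm x + 1)) > 0" using assms nx by simp
  define K where "K = ln (\<delta> / (2 * (norm x + 1)))"
  obtain t m where tm: "t < K" "intvec m" "norm (t *\<^sub>R a - m) < \<delta>/2"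
    using recur_neg[of "\<delta>/2" K a] assms by auto
  have "exp t < exp K" using tm(1) by simp
  also have "exp K = \<delta> / (2 * (norm x + 1))" unfolding K_def using pos by simp
  finally have et: "exp t < \<delta> / (2 * (norm x + 1))" .
  have key: "\<delta> / (2 * (norm x + 1)) * norm x < \<delta> / 2"
    using assms nx by (simp add: field_simps)
  show ?thesis
  proof (intro exI conjI allI impI)
    show "intvec m" by (rule tm(2))
    fix s assume s: "0 \<le> s \<and> s \<le> exp t"
    have "norm (s *\<^sub>R x) \<le> exp t * norm x" using s by (simp add: mult_right_mono)
    also have "\<dots> \<le> \<delta> / (2 * (norm x + 1)) * norm x" by (rule mult_right_mono) (use et in auto)
    finally have n1: "norm (s *\<^sub>R x) < \<delta> / 2" using key by linarith
    have "dist (s *\<^sub>R x, \<theta> + t *\<^sub>R a - m) (0, \<theta>) = norm (s *\<^sub>R x, t *\<^sub>R a - m)"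
      by (simp add: dist_norm)
    also have "\<dots> \<le> norm (s *\<^sub>R x) + norm (t *\<^sub>R a - m)" by (rule norm_Pair_le)
    finally show "dist (s *\<^sub>R x, \<theta> + t *\<^sub>R a - m) (0, \<theta>) < \<delta>" using n1 tm(3) by linarith
  qed
qed

lemma fst_zero:
  fixes Y :: "('k::finite, 'n::finite) vf"
  assumes Y: "Y \<in> LX a"
  shows "fst (Y (0, \<theta>)) = 0"
proof (rule ccontr)
  define v where "v = fst (Y (0, \<theta>))"
  assume "fst (Y (0, \<theta>)) \<noteq> 0"
  then have nv: "norm v > 0" unfolding v_def by simp
  obtain \<delta> where \<delta>: "\<delta>>0" "\<And>p. dist p (0,\<theta>) < \<delta> \<Longrightarrow> dist (Y p) (Y (0,\<theta>)) < norm v"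
    using LX_facts(3)[OF Y, of "(0,\<theta>)"] nv unfolding continuous_at_eps_delta by blast
  obtain t m where tm: "t > 1" "intvec m" "norm (t *\<^sub>R a - m) < \<delta>"
    using recur_pos[OF \<delta>(1), of 1 a] by blast
  have "Y (0, \<theta> + t *\<^sub>R a - m) = Y (0, \<theta> + t *\<^sub>R a)"
    using periodic_intvec_minus[OF LX_facts(2)[OF Y] tm(2)] by simp
  also have "\<dots> = (exp t *\<^sub>R v, snd (Y (0, \<theta>)))"
    using flow[OF Y, where t=t and x=0 and \<theta>=\<theta>] unfolding v_def by simp
  finally have Yq: "Y (0, \<theta> + t *\<^sub>R a - m) = (exp t *\<^sub>R v, snd (Y (0, \<theta>)))" .
  have "dist (0, \<theta> + t *\<^sub>R a - m) (0::real^'k, \<theta>) \<le> norm (0::real^'k) + norm (t *\<^sub>R a - m)"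
    unfolding dist_norm by (simp add: norm_Pair_le)
  then have "dist (Y (0, \<theta> + t *\<^sub>R a - m)) (Y (0,\<theta>)) < norm v" using tm(3) \<delta>(2) by simp
  then have "dist (exp t *\<^sub>R v) v < norm v"
    using dist_fst_le[of "Y (0, \<theta> + t *\<^sub>R a - m)" "Y (0,\<theta>)"] unfolding Yq v_def by simp
  moreover have "dist (exp t *\<^sub>R v) v = (exp t - 1) * norm v"
  proof -
    have "exp t *\<^sub>R v - v = (exp t - 1) *\<^sub>R v" by (simp add: algebra_simps)
    moreover have "exp t \<ge> 1" using tm(1) by simp
    ultimately show ?thesis by (simp add: dist_norm)
  qed
  moreover have "exp t - 1 > 1" using exp_ge_add_one_self[of t] tm(1) by linarith
  ultimately show False using nv by (simp add: mult_less_cancel_right1) 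
qed

lemma snd_const:
  fixes Y :: "('k::finite, 'n::finite) vf"
  assumes ri: "rationally_independent a" and Y: "Y \<in> LX a"
  shows "snd (Y (x, \<theta>)) = snd (Y (0, 0))"
proof -
  have c: "\<And>p. isCont Y p" using LX_facts(3)[OF Y] .
  have s0: "snd (Y (0, \<theta>')) = snd (Y (0, 0))" for \<theta>'
  proof (rule dense_const[OF ri, where f="\<lambda>\<theta>. snd (Y (0, \<theta>))"])
    show "isCont (\<lambda>\<theta>. snd (Y (0, \<theta>))) \<theta>" for \<theta>
      using isCont_slice[OF c, where x=0 and \<theta>=\<theta>] by (auto intro: continuous_intros)
    show "snd (Y (0, \<theta> - m)) = snd (Y (0, \<theta>))" if "intvec m" for \<theta> m
      using periodic_intvec_minus[OF LX_facts(2)[OF Y] that] by simp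
    show "snd (Y (0, \<theta> + t *\<^sub>R a)) = snd (Y (0, \<theta>))" for \<theta> t
      using flow[OF Y, where t=t and x=0 and \<theta>=\<theta>] by simp
  qed
  have "snd (Y (x, \<theta>)) = snd (Y (0, \<theta>))"
  proof (rule ccontr)
    assume ne: "snd (Y (x, \<theta>)) \<noteq> snd (Y (0, \<theta>))"
    define \<epsilon> where "\<epsilon> = dist (snd (Y (x, \<theta>))) (snd (Y (0, \<theta>)))"
    have "\<epsilon> > 0" using ne by (simp add: \<epsilon>_def)
    then obtain \<delta> where \<delta>: "\<delta>>0" "\<And>p. dist p (0,\<theta>) < \<delta> \<Longrightarrow> dist (Y p) (Y (0,\<theta>)) < \<epsilon>"
      using c[of "(0,\<theta>)"] unfolding continuous_at_eps_delta by blast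
    obtain t m where tm: "intvec m" "\<forall>s. 0 \<le> s \<and> s \<le> exp t \<longrightarrow> dist (s *\<^sub>R x, \<theta> + t *\<^sub>R a - m) (0, \<theta>) < \<delta>"
      using approach[OF \<delta>(1), where x=x and \<theta>=\<theta> and a=a] by blast
    have "dist (exp t *\<^sub>R x, \<theta> + t *\<^sub>R a - m) (0, \<theta>) < \<delta>" using tm(2) by simp
    then have d: "dist (Y (exp t *\<^sub>R x, \<theta> + t *\<^sub>R a - m)) (Y (0,\<theta>)) < \<epsilon>" by (rule \<delta>(2))
    have "Y (exp t *\<^sub>R x, \<theta> + t *\<^sub>R a - m) = Y (exp t *\<^sub>R x, \<theta> + t *\<^sub>R a)"
      using periodic_intvec_minus[OF LX_facts(2)[OF Y] tm(1)] by simp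
    then have "snd (Y (exp t *\<^sub>R x, \<theta> + t *\<^sub>R a - m)) = snd (Y (x, \<theta>))"
      using flow[OF Y, where t=t and x=x and \<theta>=\<theta>] by simp
    then have "dist (snd (Y (x, \<theta>))) (snd (Y (0,\<theta>))) < \<epsilon>"
      using dist_snd_le[of "Y (exp t *\<^sub>R x, \<theta> + t *\<^sub>R a - m)" "Y (0,\<theta>)"] d by simp
    then show False unfolding \<epsilon>_def by simp
  qed
  then show ?thesis using s0 by simp
qed


lemma comp_basis: "(axis l (1::real), 0::real^'n) \<in> (Basis :: ('k::finite, 'n::finite) pt set)"
  by (auto simp: Basis_prod_def axis_in_Basis_iff)

lemma fst_comp: "fst (Y p) $ l = Y p \<bullet> (axis l (1::real), 0::real^'n::finite)"
  for Y :: "'a \<Rightarrow> (real^'k::finite) \<times> (real^'n)"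
  by (cases "Y p") (simp add: inner_prod_def inner_axis)

lemma comp_smooth:
  fixes Y :: "('k::finite, 'n::finite) vf"
  assumes Y: "Y \<in> LX a"
  shows "smooth_fun (\<lambda>p. Y p \<bullet> (axis l (1::real), 0::real^'n))"
  using LX_facts(1)[OF Y] comp_basis unfolding smooth_map_def by blast

lemma deriv_cont:
  fixes g :: "'a::euclidean_space \<Rightarrow> real"
  assumes "smooth_fun g" shows "isCont (\<lambda>p. frechet_derivative g (at p) h) q"
proof -
  have eq: "frechet_derivative g (at p) h = (\<Sum>i\<in>Basis. (h \<bullet> i) * frechet_derivative g (at p) i)" for p
  proof -
    have lin: "linear (frechet_derivative g (at p))"
      by (rule linear_frechet_derivative[OF smooth_diff[OF assms]])
    have "frechet_derivative g (at p) h = frechet_derivative g (at p) (\<Sum>i\<in>Basis. (h \<bullet> i) *\<^sub>R i)"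
      by (simp add: euclidean_representation)
    also have "\<dots> = (\<Sum>i\<in>Basis. (h \<bullet> i) * frechet_derivative g (at p) i)"
      by (simp add: linear_sum[OF lin] linear_scale[OF lin])
    finally show ?thesis .
  qed
  have "isCont (\<lambda>p. frechet_derivative g (at p) i) q" if "i \<in> Basis" for i
    using smooth_diff[OF smooth_deriv[OF assms that]] differentiable_imp_continuous_within by blast
  then show ?thesis unfolding eq by (intro continuous_intros) auto
qed

lemma lin_repr:
  fixes Y :: "('k::finite, 'n::finite) vf"
  assumes Y: "Y \<in> LX a"
  shows "fst (Y (x, \<theta>)) $ l = frechet_derivative (\<lambda>p. Y p \<bullet> (axis l (1::real), 0::real^'n)) (at (0, \<theta>)) (x, 0)"
proof -
  define g where "g = (\<lambda>p. Y p \<bullet> (axis l (1::real), 0::real^'n))"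
  have sg: "smooth_fun g" unfolding g_def by (rule comp_smooth[OF Y])
  have gv: "\<And>p. g p = fst (Y p) $ l" unfolding g_def by (simp add: fst_comp)
  define Dd where "Dd = (\<lambda>p. frechet_derivative g (at p) (x, 0::real^'n))"
  have cD: "isCont Dd (0, \<theta>)" unfolding Dd_def by (rule deriv_cont[OF sg])
  have mainineq: "\<bar>fst (Y (x, \<theta>)) $ l - Dd (0, \<theta>)\<bar> < \<epsilon>" if eps: "\<epsilon> > 0" for \<epsilon>
  proof -
    obtain \<delta> where \<delta>: "\<delta>>0" "\<And>p. dist p (0,\<theta>) < \<delta> \<Longrightarrow> dist (Dd p) (Dd (0,\<theta>)) < \<epsilon>"
      using cD eps unfolding continuous_at_eps_delta by blast
    obtain t m where tm: "intvec m" "\<forall>s. 0 \<le> s \<and> s \<le> exp t \<longrightarrow> dist (s *\<^sub>R x, \<theta> + t *\<^sub>R a - m) (0, \<theta>) < \<delta>"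
      using approach[OF \<delta>(1), where x=x and \<theta>=\<theta> and a=a] by blast
    define \<theta>' where "\<theta>' = \<theta> + t *\<^sub>R a - m"
    define \<phi> where "\<phi> = (\<lambda>s. g (s *\<^sub>R x, \<theta>'))"
    have \<phi>d: "(\<phi> has_real_derivative Dd (s *\<^sub>R x, \<theta>')) (at s)" for s
    proof -
      let ?D = "frechet_derivative g (at (s *\<^sub>R x, \<theta>'))"
      have gD: "(g has_derivative ?D) (at (s *\<^sub>R x, \<theta>'))"
        using smooth_diff[OF sg] frechet_derivative_works by blast
      have lin: "linear ?D" using gD has_derivative_linear by blast
      have pd: "((\<lambda>s. (s *\<^sub>R x, \<theta>')) has_derivative (\<lambda>h. (h *\<^sub>R x, 0))) (at s)"
        by (auto intro!: derivative_eq_intros)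
      have "(\<phi> has_derivative (\<lambda>h. ?D (h *\<^sub>R x, 0))) (at s)"
        unfolding \<phi>_def using diff_chain_at[OF pd gD] by (simp add: o_def)
      moreover have "(\<lambda>h. ?D (h *\<^sub>R x, 0)) = (*) (Dd (s *\<^sub>R x, \<theta>'))"
      proof (rule ext)
        fix h
        have "(h *\<^sub>R x, 0::real^'n) = h *\<^sub>R (x, 0)" by simp
        then show "?D (h *\<^sub>R x, 0) = Dd (s *\<^sub>R x, \<theta>') * h"
          unfolding Dd_def using linear_scale[OF lin, of h "(x,0)"] by simp
      qed
      ultimately show ?thesis unfolding has_field_derivative_def by simp
    qed
    obtain z where z: "z > 0" "z < exp t" "\<phi> (exp t) - \<phi> 0 = (exp t - 0) * Dd (z *\<^sub>R x, \<theta>')"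
      using MVT2[of 0 "exp t" \<phi> "\<lambda>s. Dd (s *\<^sub>R x, \<theta>')"] \<phi>d by auto
    have "Y (exp t *\<^sub>R x, \<theta>') = Y (exp t *\<^sub>R x, \<theta> + t *\<^sub>R a)"
      unfolding \<theta>'_def using periodic_intvec_minus[OF LX_facts(2)[OF Y] tm(1)] by simp
    then have p1: "\<phi> (exp t) = exp t * fst (Y (x, \<theta>)) $ l"
      unfolding \<phi>_def gv using flow[OF Y, where t=t and x=x and \<theta>=\<theta>] by simp
    have p0: "\<phi> 0 = 0" unfolding \<phi>_def gv using fst_zero[OF Y, of \<theta>'] by simp
    have eqv: "fst (Y (x, \<theta>)) $ l = Dd (z *\<^sub>R x, \<theta>')"
      using z(3) p1 p0 by simp
    have "dist (z *\<^sub>R x, \<theta>') (0, \<theta>) < \<delta>" using tm(2) z unfolding \<theta>'_def by simp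
    then have "dist (Dd (z *\<^sub>R x, \<theta>')) (Dd (0, \<theta>)) < \<epsilon>" by (rule \<delta>(2))
    then show ?thesis using eqv by (simp add: dist_real_def)
  qed
  have "fst (Y (x, \<theta>)) $ l = Dd (0, \<theta>)"
  proof (rule ccontr)
    assume "fst (Y (x, \<theta>)) $ l \<noteq> Dd (0, \<theta>)"
    then have "\<bar>fst (Y (x, \<theta>)) $ l - Dd (0, \<theta>)\<bar> > 0" by simp
    from mainineq[OF this] show False by simp
  qed
  then show ?thesis unfolding Dd_def g_def .
qed

lemma homog:
  fixes Y :: "('k::finite, 'n::finite) vf"
  assumes Y: "Y \<in> LX a"
  shows "fst (Y (c *\<^sub>R x, \<theta>)) $ l = c * fst (Y (x, \<theta>)) $ l"
proof -
  let ?D = "frechet_derivative (\<lambda>p. Y p \<bullet> (axis l (1::real), 0::real^'n)) (at (0, \<theta>))"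
  have lin: "linear ?D" by (rule linear_frechet_derivative[OF smooth_diff[OF comp_smooth[OF Y]]])
  have "(c *\<^sub>R x, 0::real^'n) = c *\<^sub>R (x, 0)" by simp
  then show ?thesis using lin_repr[OF Y, of "c *\<^sub>R x" \<theta> l] lin_repr[OF Y, of x \<theta> l] linear_scale[OF lin, of c "(x,0)"]
    by simp
qed

lemma lin_x:
  fixes Y :: "('k::finite, 'n::finite) vf"
  assumes Y: "Y \<in> LX a"
  shows "fst (Y (x, \<theta>)) $ l = (\<Sum>j\<in>UNIV. x $ j * fst (Y (axis j 1, \<theta>)) $ l)"
proof -
  let ?D = "frechet_derivative (\<lambda>p. Y p \<bullet> (axis l (1::real), 0::real^'n)) (at (0, \<theta>))"
  have lin: "linear ?D" by (rule linear_frechet_derivative[OF smooth_diff[OF comp_smooth[OF Y]]])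
  have xs: "x = (\<Sum>j\<in>UNIV. x $ j *\<^sub>R axis j 1)"
  proof (subst vec_eq_iff, intro allI)
    fix i
    have "(\<Sum>j\<in>UNIV. x $ j *\<^sub>R axis j (1::real)) $ i = (\<Sum>j\<in>UNIV. if j = i then x $ j else 0)"
      unfolding sum_component by (rule sum.cong) (auto simp: axis_def)
    also have "\<dots> = x $ i" by simp
    finally show "x $ i = (\<Sum>j\<in>UNIV. x $ j *\<^sub>R axis j (1::real)) $ i" by simp
  qed
  have eq: "(x, 0::real^'n) = (\<Sum>j\<in>UNIV. x $ j *\<^sub>R (axis j 1, 0::real^'n))"
    by (subst xs) (simp add: sum_prod)
  have "?D (x, 0) = (\<Sum>j\<in>UNIV. ?D (x $ j *\<^sub>R (axis j 1, 0::real^'n)))"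
    by (subst eq, rule linear_sum[OF lin])
  also have "\<dots> = (\<Sum>j\<in>UNIV. x $ j * ?D (axis j 1, 0))"
    by (rule sum.cong[OF refl]) (simp only: linear_scale[OF lin] real_scaleR_def)
  finally have "?D (x, 0) = (\<Sum>j\<in>UNIV. x $ j * ?D (axis j 1, 0))" .
  then show ?thesis using lin_repr[OF Y] by simp
qed

lemma const_theta:
  fixes Y :: "('k::finite, 'n::finite) vf"
  assumes ri: "rationally_independent a" and Y: "Y \<in> LX a"
  shows "fst (Y (x, \<theta>)) $ l = fst (Y (x, 0)) $ l"
proof (rule dense_const[OF ri, where f="\<lambda>\<theta>. fst (Y (x, \<theta>)) $ l"])
  show "isCont (\<lambda>\<theta>. fst (Y (x, \<theta>)) $ l) \<theta>" for \<theta>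
    using isCont_slice[OF LX_facts(3)[OF Y], where x=x and \<theta>=\<theta>] by (auto intro: continuous_intros)
  show "fst (Y (x, \<theta> - m)) $ l = fst (Y (x, \<theta>)) $ l" if "intvec m" for \<theta> m
    using periodic_intvec_minus[OF LX_facts(2)[OF Y] that] by simp
  show "fst (Y (x, \<theta> + t *\<^sub>R a)) $ l = fst (Y (x, \<theta>)) $ l" for \<theta> t
  proof -
    have "exp t * fst (Y (x, \<theta> + t *\<^sub>R a)) $ l = fst (Y (exp t *\<^sub>R x, \<theta> + t *\<^sub>R a)) $ l"
      using homog[OF Y] by simp
    also have "\<dots> = exp t * fst (Y (x, \<theta>)) $ l"
      using flow[OF Y, where t=t and x=x and \<theta>=\<theta>] by simp
    finally show ?thesis by simp
  qed
qed

lemma LX_Fv: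
  fixes Y :: "('k::finite, 'n::finite) vf"
  assumes ri: "rationally_independent a" and Y: "Y \<in> LX a"
  shows "Y = Fv (\<chi> l j. fst (Y (axis j 1, 0)) $ l) (snd (Y (0, 0)))"
proof (rule ext)
  fix p :: "('k, 'n) pt"
  obtain x \<theta> where p: "p = (x, \<theta>)" by (cases p)
  have "fst (Y (x, \<theta>)) = (\<chi> l j. fst (Y (axis j 1, 0)) $ l) *v x"
  proof (subst vec_eq_iff, intro allI)
    fix l
    show "fst (Y (x, \<theta>)) $ l = ((\<chi> l j. fst (Y (axis j 1, 0)) $ l) *v x) $ l"
      unfolding lin_x[OF Y, of x \<theta> l] matrix_vector_mult_def
      using const_theta[OF ri Y, where \<theta>=\<theta>] by (simp add: mult.commute)
  qed
  moreover have "snd (Y (x, \<theta>)) = snd (Y (0, 0))" by (rule snd_const[OF ri Y])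
  ultimately show "Y p = Fv (\<chi> l j. fst (Y (axis j 1, 0)) $ l) (snd (Y (0, 0))) p"
    unfolding p Fv_def by (simp add: prod_eq_iff)
qed


theorem lemma2p2:
  fixes a :: "real^'n"
  assumes "rationally_independent a"
  shows "(\<forall>Y::('k::finite, 'n) vf. Y \<in> LX a \<longleftrightarrow> (\<exists>c. Y = lin_comb c))
    \<and> (\<forall>c. lin_comb c = (\<lambda>p::('k, 'n) pt. 0) \<longrightarrow> (\<forall>i. c i = 0))
    \<and> inj (basis_vf :: _ \<Rightarrow> ('k, 'n) vf)
    \<and> card (range (basis_vf :: _ \<Rightarrow> ('k, 'n) vf)) = CARD('k)^2 + CARD('n)
    \<and> (\<forall>Y\<in>LX a. \<forall>Z\<in>LX a. \<forall>s t. (\<lambda>p. s *\<^sub>R Y p + t *\<^sub>R Z p) \<in> (LX a :: ('k, 'n) vf set)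
          \<and> lie_bracket Y Z \<in> LX a)"
proof -
  have P1: "\<forall>Y::('k, 'n) vf. Y \<in> LX a \<longleftrightarrow> (\<exists>c. Y = lin_comb c)"
  proof (intro allI iffI)
    fix Y :: "('k, 'n) vf"
    assume "Y \<in> LX a"
    then obtain M w where "Y = Fv M w" using LX_Fv[OF assms] by blast
    then show "\<exists>c. Y = lin_comb c" using Fv_lin_comb by blast
  next
    fix Y :: "('k, 'n) vf" assume "\<exists>c. Y = lin_comb c"
    then obtain c where c: "Y = lin_comb c" by blast
    show "Y \<in> LX a" unfolding c lin_comb_Fv by (rule Fv_LX)
  qed
  have P2: "\<forall>c. lin_comb c = (\<lambda>p::('k, 'n) pt. 0) \<longrightarrow> (\<forall>i. c i = 0)"
  proof (intro allI impI)
    fix c :: "('k \<times> 'k) + 'n \<Rightarrow> real" and i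
    assume z: "lin_comb c = (\<lambda>p::('k, 'n) pt. 0)"
    have z': "Fv (matc c) (vecc c) p = (0 :: ('k, 'n) pt)" for p
      using fun_cong[OF z, of p] by (simp add: lin_comb_Fv)
    show "c i = 0"
    proof (cases i)
      case (Inl jl)
      then obtain j l where i: "i = Inl (j, l)" by (cases jl) auto
      have "matc c *v axis j 1 = 0" using z'[of "(axis j 1, 0)"] by (simp add: Fv_def zero_prod_def)
      then have "(matc c *v axis j 1) $ l = 0" by simp
      moreover have "(matc c *v axis j 1) $ l = c (Inl (j, l))"
      proof -
        have "(matc c *v axis j 1) $ l = (\<Sum>k\<in>UNIV. c (Inl (k, l)) * (if k = j then 1 else 0))"
          by (simp add: matrix_vector_mult_def matc_def axis_def)
        also have "\<dots> = (\<Sum>k\<in>UNIV. if k = j then c (Inl (k, l)) else 0)"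
          by (rule sum.cong) auto
        finally show ?thesis by simp
      qed
      ultimately show ?thesis using i by simp
    next
      case (Inr r)
      have "vecc c = 0" using z'[of "(0, 0)"] by (simp add: Fv_def zero_prod_def)
      then show ?thesis using Inr by (simp add: vecc_def vec_eq_iff)
    qed
  qed
  have P3: "inj (basis_vf :: _ \<Rightarrow> ('k, 'n) vf)"
  proof (rule injI)
    fix i i' :: "('k \<times> 'k) + 'n"
    assume e: "basis_vf i = (basis_vf i' :: ('k, 'n) vf)"
    have ep: "basis_vf i p = basis_vf i' p" for p :: "('k, 'n) pt" using e by simp
    show "i = i'"
    proof (cases i)
      case (Inl jl)
      then obtain j l where i: "i = Inl (j, l)" by (cases jl) auto
      show ?thesis
      proof (cases i')
        case (Inl jl')
        then obtain j' l' where i': "i' = Inl (j', l')" by (cases jl') auto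
        have h: "axis l (1::real) = axis l' (axis j 1 $ j')"
          using ep[of "(axis j 1, 0)"] unfolding i i' by simp
        show ?thesis
        proof (cases "j' = j")
          case True
          then have "axis l (1::real) = axis l' 1" using h by simp
          then show ?thesis using i i' True by (simp add: axis_eq_axis)
        next
          case False
          then have "axis l (1::real) = axis l' 0" using h by (simp add: axis_def)
          then have "axis l (1::real) = 0" by (simp add: vec_eq_iff axis_def)
          then show ?thesis by (simp add: axis_eq_0_iff)
        qed
      next
        case (Inr r)
        have "basis_vf i (0, 0) = ((0::real^'k), (0::real^'n))" using i by simp
        moreover have "basis_vf i' ((0::real^'k), (0::real^'n)) = (0, axis r 1)" using Inr by simp
        ultimately show ?thesis using ep[of "(0,0)"] by (simp add: axis_eq_0_iff)
      qed
    next
      case (Inr r)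
      show ?thesis
      proof (cases i')
        case (Inl jl')
        then obtain j' l' where i': "i' = Inl (j', l')" by (cases jl') auto
        have "basis_vf i' (0, 0) = ((0::real^'k), (0::real^'n))" using i' by simp
        moreover have "basis_vf i ((0::real^'k), (0::real^'n)) = (0, axis r 1)" using Inr by simp
        ultimately show ?thesis using ep[of "(0,0)"] by (simp add: axis_eq_0_iff)
      next
        case (Inr r')
        have "axis r (1::real) = axis r' 1" using ep[of "(0,0)"] \<open>i = Inr r\<close> Inr by simp
        then show ?thesis using \<open>i = Inr r\<close> Inr by (simp add: axis_eq_axis)
      qed
    qed
  qed
  have P4: "card (range (basis_vf :: _ \<Rightarrow> ('k, 'n) vf)) = CARD('k)^2 + CARD('n)"
    using card_image[OF P3] by (simp add: card_sum card_prod power2_eq_square)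
  have P5: "\<forall>Y\<in>LX a. \<forall>Z\<in>LX a. \<forall>s t. (\<lambda>p. s *\<^sub>R Y p + t *\<^sub>R Z p) \<in> (LX a :: ('k, 'n) vf set)
          \<and> lie_bracket Y Z \<in> LX a"
  proof (intro ballI allI conjI)
    fix Y Z :: "('k, 'n) vf" and s t :: real
    assume "Y \<in> LX a" "Z \<in> LX a"
    then obtain c d where cd: "Y = lin_comb c" "Z = lin_comb d" using P1 by blast
    have "(\<lambda>p. s *\<^sub>R Y p + t *\<^sub>R Z p) = Fv (s *\<^sub>R matc c + t *\<^sub>R matc d) (s *\<^sub>R vecc c + t *\<^sub>R vecc d)"
      unfolding cd lin_comb_Fv by (rule ext) (simp add: Fv_lincomb)
    then show "(\<lambda>p. s *\<^sub>R Y p + t *\<^sub>R Z p) \<in> LX a" by (simp add: Fv_LX)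
    show "lie_bracket Y Z \<in> LX a" unfolding cd lin_comb_Fv Fv_bracket by (rule Fv_LX)
  qed
  show ?thesis by (rule conjI[OF P1 conjI[OF P2 conjI[OF P3 conjI[OF P4 P5]]]])
qed

end
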